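(* Assume $k = 1$, values are i.i.d. (all $F_i = F$ on $[0,\bar v]$), and $A$ is the efficient allocation rule (any tie-breaking). Among all (non-negative) payment rules $P$ that implement $A$ — without requiring ex-post individual rationality — the winner-pays-bid rule minimizes $\mathbb E[g(R)]$ for every convex $g : \mathbb R \to \mathbb R$ (for which the expectations exist), where $R = \sum_i P_i(\bm v)$; i.e. $\mathbb E[g(\sum_i P_i^{\mathrm{WPB}}(\bm v))] \le \mathbb E[g(\sum_i P_i(\bm v))]$.
   Context: Setting: $n$ risk-neutral unit-demand bidders and $k$ identical items, $1 \le k < n$. Bidder $i$ has private value $v_i \in \mathcal V_i = [0,\bar v_i]$, drawn independently across bidders from a distribution $F_i$ with density $f_i > 0$ on $\mathcal V_i$; $\bm v = (v_1,\dots,v_n)$, $\mathcal V = \prod_i \mathcal V_i$. An allocation rule is a measurable map $A : \mathcal V \to \{0,1\}^n$ with $\sum_i A_i(\bm v) \le k$. Its interim allocation is $x_i(v_i) = \mathbb E[A_i(\bm v) \mid v_i]$; its interim payment function is $z_i(v_i) = v_i x_i(v_i) - \int_0^{v_i} x_i(u)\,du$. The efficient allocation rule (single item) gives the item to a bidder with the highest value, ties broken by any fixed rule. A payment rule is a measurable map $P : \mathcal V \to [0,\infty)^n$ (payments are non-negative). $P$ implements $A$ if $(A,P)$ is Bayesian incentive compatible, i.e. $\mathbb E[v_i A_i(\bm v) - P_i(\bm v) \mid v_i] \ge \mathbb E[v_i A_i(v_i',\bm v_{-i}) - P_i(v_i',\bm v_{-i}) \mid v_i]$ for all $i, v_i,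 v_i'$, and satisfies revenue equivalence $\mathbb E[P_i(\bm v) \mid v_i] = z_i(v_i)$ for all $i, v_i$. The winner-pays-bid (WPB) payment rule is $P_i^{\mathrm{WPB}}(\bm v) = b_i^{\mathrm{WPB}}(v_i) A_i(\bm v)$ with $b_i^{\mathrm{WPB}}(v_i) = z_i(v_i)/x_i(v_i)$ when $x_i(v_i) > 0$ and $b_i^{\mathrm{WPB}}(v_i) = 0$ otherwise. *)

theory Defs
  imports "HOL-Probability.Probability"
begin

text \<open>Bidders are indexed by 0..n-1; value profiles are functions nat => real,
  and the joint (i.i.d.) distribution is the product measure.\<close>

definition value_dist :: "real \<Rightarrow> (real \<Rightarrow> real) \<Rightarrow> real measure" where
  "value_dist vbar f = density (restrict_space lborel {0..vbar}) (\<lambda>x. ennreal (f x))"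

definition profile_measure :: "nat \<Rightarrow> real measure \<Rightarrow> (nat \<Rightarrow> real) measure" where
  "profile_measure n D = PiM {..<n} (\<lambda>_. D)"

text \<open>Interim allocation x_i(t) = E[A_i(v) | v_i = t] (others integrated out,
  by independence).\<close>
definition interim_alloc ::
  "(nat \<Rightarrow> real) measure \<Rightarrow> ((nat \<Rightarrow> real) \<Rightarrow> nat \<Rightarrow> real) \<Rightarrow> nat \<Rightarrow> real \<Rightarrow> real" where
  "interim_alloc M A i t = (\<integral>v. A (v(i := t)) i \<partial>M)"

definition interim_pay ::
  "(nat \<Rightarrow> real) measure \<Rightarrow> ((nat \<Rightarrow> real) \<Rightarrow> nat \<Rightarrow> real) \<Rightarrow> nat \<Rightarrow> real \<Rightarrow> real" where
  "interim_pay M A i t =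
     t * interim_alloc M A i t - set_lebesgue_integral lborel {0..t} (\<lambda>u. interim_alloc M A i u)"

definition efficient_single ::
  "nat \<Rightarrow> (nat \<Rightarrow> real) measure \<Rightarrow> ((nat \<Rightarrow> real) \<Rightarrow> nat \<Rightarrow> real) \<Rightarrow> bool" where
  "efficient_single n M A \<longleftrightarrow>
     (\<forall>i<n. (\<lambda>v. A v i) \<in> borel_measurable M) \<and>
     (\<forall>v\<in>space M. (\<forall>i<n. A v i \<in> {0, 1}) \<and> (\<Sum>i<n. A v i) = 1 \<and>
        (\<forall>i<n. A v i = 1 \<longrightarrow> (\<forall>j<n. v j \<le> v i)))"

definition payment_rule ::
  "nat \<Rightarrow> (nat \<Rightarrow> real) measure \<Rightarrow> ((nat \<Rightarrow> real) \<Rightarrow> nat \<Rightarrow> real) \<Rightarrow> bool" where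
  "payment_rule n M P \<longleftrightarrow>
     (\<forall>i<n. (\<lambda>v. P v i) \<in> borel_measurable M) \<and>
     (\<forall>v\<in>space M. \<forall>i<n. 0 \<le> P v i)"

text \<open>P implements A: Bayesian incentive compatibility and revenue equivalence.\<close>
definition implements ::
  "nat \<Rightarrow> real \<Rightarrow> (nat \<Rightarrow> real) measure \<Rightarrow> ((nat \<Rightarrow> real) \<Rightarrow> nat \<Rightarrow> real)
     \<Rightarrow> ((nat \<Rightarrow> real) \<Rightarrow> nat \<Rightarrow> real) \<Rightarrow> bool" where
  "implements n vbar M A P \<longleftrightarrow>
     (\<forall>i<n. \<forall>t\<in>{0..vbar}. \<forall>t'\<in>{0..vbar}.
        (\<integral>v. t * A (v(i := t)) i - P (v(i := t)) i \<partial>M)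
          \<ge> (\<integral>v. t * A (v(i := t')) i - P (v(i := t')) i \<partial>M)) \<and>
     (\<forall>i<n. \<forall>t\<in>{0..vbar}.
        (\<integral>\<^sup>+v. ennreal (P (v(i := t)) i) \<partial>M) = ennreal (interim_pay M A i t))"

definition wpb_bid ::
  "(nat \<Rightarrow> real) measure \<Rightarrow> ((nat \<Rightarrow> real) \<Rightarrow> nat \<Rightarrow> real) \<Rightarrow> nat \<Rightarrow> real \<Rightarrow> real" where
  "wpb_bid M A i t =
     (if interim_alloc M A i t > 0 then interim_pay M A i t / interim_alloc M A i t else 0)"

definition wpb ::
  "(nat \<Rightarrow> real) measure \<Rightarrow> ((nat \<Rightarrow> real) \<Rightarrow> nat \<Rightarrow> real) \<Rightarrow> (nat \<Rightarrow> real) \<Rightarrow> nat \<Rightarrow> real" where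
  "wpb M A v i = wpb_bid M A i (v i) * A v i"

end

theory Submission
  imports Defs
begin


lemma slope3:
  fixes g :: "real \<Rightarrow> real"
  assumes g: "convex_on UNIV g" and am: "a < m" and mc: "m < c"
  shows "(g m - g a) / (m - a) \<le> (g c - g a) / (c - a)"
    and "(g c - g a) / (c - a) \<le> (g c - g m) / (c - m)"
proof -
  have e: "\<And>p q r s :: real. (p - q) / (r - s) = (q - p) / (s - r)"
    by (metis minus_diff_eq minus_divide_divide)
  note h = convex_on_slope_le[OF g UNIV_I UNIV_I am mc]
  show "(g m - g a) / (m - a) \<le> (g c - g a) / (c - a)" using h(1) e by metis
  show "(g c - g a) / (c - a) \<le> (g c - g m) / (c - m)" using h(2) e by metis
qed

lemma convex_subgrad:
  fixes g :: "real \<Rightarrow> real"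
  assumes g: "convex_on UNIV g"
  shows "\<exists>c. mono c \<and> (\<forall>x y. g x + c x * (y - x) \<le> g y)"
proof -
  define S where "S a b = (g b - g a) / (b - a)" for a b
  define c where "c x = Inf ((\<lambda>y. S x y) ` {x<..})" for x
  have s3: "S a m \<le> S a w" "S a w \<le> S m w" if "a < m" "m < w" for a m w
    using slope3[OF g that] unfolding S_def by auto
  have bdd: "bdd_below ((\<lambda>y. S x y) ` {x<..})" for x
  proof (rule bdd_belowI2)
    fix y assume "y \<in> {x<..}"
    then show "S (x - 1) x \<le> S x y" using s3[of "x - 1" x y] by auto
  qed
  have ne: "(\<lambda>y. S x y) ` {x<..} \<noteq> {}" for x by auto
  have lower: "c x \<le> S x y" if "x < y" for x y
    unfolding c_def by (rule cInf_lower[OF _ bdd]) (use that in auto)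
  have upper: "S y x \<le> c x" if "y < x" for x y
    unfolding c_def by (rule cInf_greatest[OF ne]) (use that s3 in \<open>force\<close>)
  have "mono c"
  proof (rule monoI)
    fix x x' :: real assume "x \<le> x'"
    show "c x \<le> c x'"
    proof (cases "x = x'")
      case False
      then have "x < x'" using \<open>x \<le> x'\<close> by simp
      have "S x x' \<le> c x'"
        unfolding c_def by (rule cInf_greatest[OF ne]) (use \<open>x < x'\<close> s3 in \<open>force\<close>)
      then show ?thesis using lower[OF \<open>x < x'\<close>] by simp
    qed simp
  qed
  moreover have "g x + c x * (y - x) \<le> g y" for x y
  proof (cases x y rule: linorder_cases)
    case less
    have "c x * (y - x) \<le> S x y * (y - x)" using lower[OF less] less by (intro mult_right_mono) auto
    also have "\<dots> = g y - g x" unfolding S_def using less by simp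
    finally show ?thesis by simp
  next
    case greater
    have "S y x * (x - y) \<le> c x * (x - y)" using upper[OF greater] greater by (intro mult_right_mono) auto
    moreover have "S y x * (x - y) = g x - g y" unfolding S_def using greater by simp
    ultimately show ?thesis by (simp add: algebra_simps)
  qed simp
  ultimately show ?thesis by blast
qed


locale auct =
  fixes n :: nat and vbar :: real and f :: "real \<Rightarrow> real"
    and A :: "(nat \<Rightarrow> real) \<Rightarrow> nat \<Rightarrow> real"
  assumes vbar: "0 < vbar"
    and f_meas: "f \<in> borel_measurable borel"
    and F_prob: "prob_space (value_dist vbar f)"
    and A_eff: "efficient_single n (profile_measure n (value_dist vbar f)) A"
begin

abbreviation "D \<equiv> value_dist vbar f"
abbreviation "M \<equiv> profile_measure n D"
abbreviation "x \<equiv> interim_alloc M A"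
abbreviation "z \<equiv> interim_pay M A"
abbreviation "b \<equiv> wpb_bid M A"

lemma space_D: "space D = {0..vbar}"
  unfolding value_dist_def by (simp add: space_restrict_space)

lemma sets_D: "sets D = sets (restrict_space borel {0..vbar})"
  unfolding value_dist_def by (simp add: sets_restrict_space)

lemma M_prob: "prob_space M"
  unfolding profile_measure_def by (intro prob_space_PiM F_prob)

lemma space_M: "space M = (\<Pi>\<^sub>E i\<in>{..<n}. {0..vbar})"
  unfolding profile_measure_def by (simp add: space_PiM space_D)

lemma upd_space: "v \<in> space M \<Longrightarrow> i < n \<Longrightarrow> t \<in> {0..vbar} \<Longrightarrow> v(i:=t) \<in> space M"
  by (auto simp: space_M PiE_def extensional_def Pi_iff)

lemma upd_meas: assumes "i < n" "t \<in> {0..vbar}"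
  shows "(\<lambda>v. v(i:=t)) \<in> measurable M M"
  unfolding profile_measure_def
proof (rule measurable_fun_upd[where J="{..<n}"])
  show "{..<n} = {..<n} \<union> {i}" using assms by auto
  show "(\<lambda>v. v) \<in> measurable (Pi\<^sub>M {..<n} (\<lambda>_. D)) (Pi\<^sub>M {..<n} (\<lambda>_. D))" by simp
  show "(\<lambda>v. t) \<in> measurable (Pi\<^sub>M {..<n} (\<lambda>_. D)) D" using assms by (simp add: space_D)
qed

lemma A_meas: "i < n \<Longrightarrow> (\<lambda>v. A v i) \<in> borel_measurable M"
  using A_eff unfolding efficient_single_def by auto

lemma A01: "v \<in> space M \<Longrightarrow> i < n \<Longrightarrow> A v i = 0 \<or> A v i = 1"
  using A_eff unfolding efficient_single_def by auto

lemma A_sum: "v \<in> space M \<Longrightarrow> (\<Sum>i<n. A v i) = 1"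
  using A_eff unfolding efficient_single_def by auto

lemma A_max: "v \<in> space M \<Longrightarrow> i < n \<Longrightarrow> A v i = 1 \<Longrightarrow> j < n \<Longrightarrow> v j \<le> v i"
  using A_eff unfolding efficient_single_def by auto

lemma A_nonneg: "v \<in> space M \<Longrightarrow> i < n \<Longrightarrow> 0 \<le> A v i"
  using A01 by force

lemma A_le1: "v \<in> space M \<Longrightarrow> i < n \<Longrightarrow> A v i \<le> 1"
  using A01 by force

lemma A_other: assumes v: "v \<in> space M" and "i < n" "A v i = 1" "j < n" "j \<noteq> i"
  shows "A v j = 0"
proof -
  have "(\<Sum>k\<in>{i,j}. A v k) \<le> (\<Sum>k<n. A v k)"
    by (rule sum_mono2) (use assms A_nonneg in auto)
  then have "A v i + A v j \<le> 1" using assms A_sum[OF v] by simp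
  then show ?thesis using assms A01[OF v, of j] by auto
qed

lemma A_winner: assumes v: "v \<in> space M" shows "\<exists>w<n. A v w = 1"
proof (rule ccontr)
  assume "\<not> ?thesis"
  then have "\<forall>k<n. A v k = 0" using A01[OF v] by blast
  then have "(\<Sum>k<n. A v k) = 0" by simp
  then show False using A_sum[OF v] by simp
qed

lemma A_mono: assumes v: "v \<in> space M" and i: "i < n" and t: "0 \<le> t" "t \<le> t'" "t' \<le> vbar"
  shows "A (v(i:=t)) i \<le> A (v(i:=t')) i"
proof (cases "A (v(i:=t)) i = 1")
  case True
  have vt: "v(i:=t) \<in> space M" "v(i:=t') \<in> space M" using upd_space[OF v i] t by auto
  show ?thesis
  proof (cases "t = t'")
    case True then show ?thesis by simp
  next
    case False
    then have tt: "t < t'" using t by simp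
    obtain w where w: "w < n" "A (v(i:=t')) w = 1" using A_winner[OF vt(2)] by blast
    have "w = i"
    proof (rule ccontr)
      assume "w \<noteq> i"
      have "(v(i:=t)) w \<le> (v(i:=t)) i" using A_max[OF vt(1) i True w(1)] .
      moreover have "(v(i:=t')) i \<le> (v(i:=t')) w" using A_max[OF vt(2) w(1) w(2) i] .
      ultimately show False using \<open>w \<noteq> i\<close> tt by simp
    qed
    then show ?thesis using w A_le1[OF vt(1) i] by simp
  qed
next
  case False
  have "v(i:=t) \<in> space M" using upd_space[OF v i, of t] t by auto
  then have "A (v(i:=t)) i = 0" using A01[of "v(i:=t)" i] i False by auto
  then show ?thesis using A_nonneg[OF upd_space[OF v i, of t'] i] t by auto
qed

lemma Aupd_meas: "i < n \<Longrightarrow> t \<in> {0..vbar} \<Longrightarrow> (\<lambda>v. A (v(i:=t)) i) \<in> borel_measurable M"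
  using measurable_compose[OF upd_meas A_meas] by simp

lemma Aupd_int: assumes "i < n" "t \<in> {0..vbar}"
  shows "integrable M (\<lambda>v. A (v(i:=t)) i)"
proof -
  interpret prob_space M by (rule M_prob)
  show ?thesis
  proof (rule integrable_const_bound[where B=1])
    show "AE v in M. norm (A (v(i:=t)) i) \<le> 1"
      using assms A_nonneg A_le1 upd_space by (auto intro!: AE_I2)
  qed (rule Aupd_meas[OF assms])
qed

lemma x_nonneg: "i < n \<Longrightarrow> t \<in> {0..vbar} \<Longrightarrow> 0 \<le> x i t"
  unfolding interim_alloc_def
  by (rule integral_nonneg_AE) (auto intro!: AE_I2 A_nonneg upd_space)

lemma x_le1: assumes "i < n" "t \<in> {0..vbar}" shows "x i t \<le> 1"
proof -
  interpret prob_space M by (rule M_prob)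
  have "x i t \<le> (\<integral>v. 1 \<partial>M)"
    unfolding interim_alloc_def
    by (rule integral_mono[OF Aupd_int[OF assms]]) (use assms A_le1 upd_space in auto)
  then show ?thesis by (simp add: prob_space)
qed

lemma x_mono: assumes "i < n" "0 \<le> t" "t \<le> t'" "t' \<le> vbar"
  shows "x i t \<le> x i t'"
  unfolding interim_alloc_def
  by (rule integral_mono) (use assms in \<open>auto intro!: Aupd_int A_mono\<close>)

lemma x_mono_on: "i < n \<Longrightarrow> mono_on {0..vbar} (x i)"
  by (auto intro!: mono_onI x_mono)

lemma disint:
  assumes i: "i < n" and F[measurable]: "F \<in> borel_measurable M"
  shows "integral\<^sup>N M F = (\<integral>\<^sup>+ t. (\<integral>\<^sup>+ v. F (v(i:=t)) \<partial>M) \<partial>D)"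
proof -
  interpret D: prob_space D by (rule F_prob)
  interpret PS: product_sigma_finite "\<lambda>_. D" by unfold_locales
  define I where "I = {..<n} - {i}"
  have eq: "{..<n} = insert i I" using i by (auto simp: I_def)
  have fin: "finite I" "i \<notin> I" by (auto simp: I_def)
  have F': "F \<in> borel_measurable (Pi\<^sub>M (insert i I) (\<lambda>_. D))"
    using F unfolding profile_measure_def eq .
  have "integral\<^sup>N M F = (\<integral>\<^sup>+ t. (\<integral>\<^sup>+ y. F (y(i:=t)) \<partial>Pi\<^sub>M I (\<lambda>_. D)) \<partial>D)"
    unfolding profile_measure_def eq by (rule PS.product_nn_integral_insert_rev[OF fin F'])
  also have "\<dots> = (\<integral>\<^sup>+ t. (\<integral>\<^sup>+ v. F (v(i:=t)) \<partial>M) \<partial>D)"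
  proof (rule nn_integral_cong)
    fix t assume t: "t \<in> space D"
    have m: "(\<lambda>v. F (v(i:=t))) \<in> borel_measurable (Pi\<^sub>M (insert i I) (\<lambda>_. D))"
      using measurable_compose[OF upd_meas[OF i] F] t unfolding space_D profile_measure_def eq by simp
    have "(\<integral>\<^sup>+ v. F (v(i:=t)) \<partial>M) = (\<integral>\<^sup>+ y. (\<integral>\<^sup>+ s. F ((y(i:=s))(i:=t)) \<partial>D) \<partial>Pi\<^sub>M I (\<lambda>_. D))"
      unfolding profile_measure_def eq by (rule PS.product_nn_integral_insert[OF fin m])
    also have "\<dots> = (\<integral>\<^sup>+ y. F (y(i:=t)) \<partial>Pi\<^sub>M I (\<lambda>_. D))"
      by (simp add: D.emeasure_space_1)
    finally show "(\<integral>\<^sup>+ y. F (y(i:=t)) \<partial>Pi\<^sub>M I (\<lambda>_. D)) = (\<integral>\<^sup>+ v. F (v(i:=t)) \<partial>M)" by simp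
  qed
  finally show ?thesis .
qed

lemma x_mono_sub: "i < n \<Longrightarrow> 0 \<le> a \<Longrightarrow> b' \<le> vbar \<Longrightarrow> mono_on {a..b'} (x i)"
  by (rule mono_on_subset[OF x_mono_on]) auto

lemma x_setint: assumes i: "i < n" and t: "0 \<le> t" "t \<le> vbar"
  shows "set_integrable lborel {0..t} (x i)"
  unfolding set_integrable_def
proof (rule integrableI_bounded_set[where A="{0..t}" and B=1])
  have "x i \<in> borel_measurable (restrict_space borel {0..t})"
    by (rule borel_measurable_mono_on_fnc[OF x_mono_sub[OF i order.refl t(2)]])
  then have "(\<lambda>u. indicator {0..t} u *\<^sub>R x i u) \<in> borel_measurable borel"
    by (subst (asm) borel_measurable_restrict_space_iff) auto
  then show "(\<lambda>u. indicator {0..t} u *\<^sub>R x i u) \<in> borel_measurable lborel" by simp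
  show "AE u in lborel. u \<in> {0..t} \<longrightarrow> norm (indicator {0..t} u *\<^sub>R x i u) \<le> 1"
    using x_nonneg[OF i] x_le1[OF i] t by (auto intro!: AE_I2)
qed (use t in \<open>auto simp: emeasure_lborel_Icc\<close>)

definition Zf :: "nat \<Rightarrow> real \<Rightarrow> real" where "Zf i t = integral {0..t} (x i)"

lemma x_intg_on: "i < n \<Longrightarrow> 0 \<le> a \<Longrightarrow> b' \<le> vbar \<Longrightarrow> x i integrable_on {a..b'}"
  by (rule integrable_on_mono_on[OF x_mono_sub])

lemma z_eq: assumes "i < n" "0 \<le> t" "t \<le> vbar"
  shows "z i t = t * x i t - Zf i t"
  unfolding interim_pay_def Zf_def set_borel_integral_eq_integral(2)[OF x_setint[OF assms]] ..

lemma Z_diff: assumes i: "i < n" and st: "0 \<le> s" "s \<le> t" "t \<le> vbar"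
  shows "(t - s) * x i s \<le> Zf i t - Zf i s" "Zf i t - Zf i s \<le> (t - s) * x i t"
proof -
  have "integral {0..s} (x i) + integral {s..t} (x i) = integral {0..t} (x i)"
    by (rule Henstock_Kurzweil_Integration.integral_combine) (use st in \<open>auto intro!: x_intg_on[OF i]\<close>)
  then have eq: "Zf i t - Zf i s = integral {s..t} (x i)" unfolding Zf_def by simp
  have "integral {s..t} (\<lambda>_. x i s) \<le> integral {s..t} (x i)"
    by (rule integral_le) (use st in \<open>auto intro!: x_intg_on[OF i] x_mono[OF i]\<close>)
  then show "(t - s) * x i s \<le> Zf i t - Zf i s" using eq st by simp
  have "integral {s..t} (x i) \<le> integral {s..t} (\<lambda>_. x i t)"
    by (rule integral_le) (use st in \<open>auto intro!: x_intg_on[OF i] x_mono[OF i]\<close>)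
  then show "Zf i t - Zf i s \<le> (t - s) * x i t" using eq st by simp
qed

lemma Z0: "Zf i 0 = 0" unfolding Zf_def by simp

lemma Z_bounds: assumes i: "i < n" and t: "0 \<le> t" "t \<le> vbar"
  shows "0 \<le> Zf i t" "Zf i t \<le> t * x i t"
  using Z_diff[OF i order.refl t] x_nonneg[OF i, of 0] t
  by (auto simp: Z0 intro: order.trans[OF mult_nonneg_nonneg])

lemma z_nonneg: "i < n \<Longrightarrow> 0 \<le> t \<Longrightarrow> t \<le> vbar \<Longrightarrow> 0 \<le> z i t"
  using z_eq Z_bounds by fastforce

lemma bx: assumes i: "i < n" and t: "0 \<le> t" "t \<le> vbar"
  shows "b i t * x i t = z i t"
proof (cases "x i t > 0")
  case True then show ?thesis unfolding wpb_bid_def by simp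
next
  case False
  then have "x i t = 0" using x_nonneg[OF i, of t] t by simp
  then show ?thesis using Z_bounds[OF i t] z_eq[OF i t] unfolding wpb_bid_def by simp
qed

lemma b_nonneg: "i < n \<Longrightarrow> 0 \<le> t \<Longrightarrow> t \<le> vbar \<Longrightarrow> 0 \<le> b i t"
  unfolding wpb_bid_def using z_nonneg by auto

lemma b_le: assumes i: "i < n" and t: "0 \<le> t" "t \<le> vbar"
  shows "b i t \<le> t"
proof (cases "x i t > 0")
  case True
  have "z i t \<le> t * x i t" using z_eq[OF i t] Z_bounds[OF i t] by simp
  then show ?thesis using True unfolding wpb_bid_def by (simp add: divide_le_eq)
next
  case False then show ?thesis unfolding wpb_bid_def using t by simp
qed

lemma b_mono: assumes i: "i < n" and st: "0 \<le> s" "s \<le> t" "t \<le> vbar"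
  shows "b i s \<le> b i t"
proof (cases "x i s > 0")
  case False
  then show ?thesis using b_nonneg[OF i, of t] st unfolding wpb_bid_def by auto
next
  case True
  have xt: "x i s \<le> x i t" using x_mono[OF i st] .
  then have xtp: "x i t > 0" using True by simp
  have bs: "b i s = s - Zf i s / x i s" using True z_eq[OF i st(1)] st
    unfolding wpb_bid_def by (simp add: field_simps)
  have bt: "b i t = t - Zf i t / x i t" using xtp z_eq[OF i _ st(3)] st
    unfolding wpb_bid_def by (simp add: field_simps)
  have Zs: "0 \<le> Zf i s" using Z_bounds[OF i st(1)] st by simp
  have d: "Zf i t \<le> Zf i s + (t - s) * x i t" using Z_diff(2)[OF i st] by simp
  have "Zf i t / x i t \<le> (Zf i s + (t - s) * x i t) / x i t"
    by (rule divide_right_mono[OF d]) (use xtp in simp)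
  also have "\<dots> = Zf i s / x i t + (t - s)"
    using xtp by (simp add: add_divide_distrib)
  also have "Zf i s / x i t \<le> Zf i s / x i s"
    by (rule divide_left_mono) (use Zs xt True in auto)
  finally show ?thesis unfolding bs bt by simp
qed

lemma wpb_upd: "wpb M A (v(i:=t)) i = b i t * A (v(i:=t)) i"
  unfolding wpb_def by simp

lemma b_mono_on: assumes i: "i < n" shows "mono_on {0..vbar} (b i)"
proof (rule mono_onI)
  fix r s assume "r \<in> {0..vbar}" "s \<in> {0..vbar}" "r \<le> s"
  then show "b i r \<le> b i s" using b_mono[OF i, of r s] by simp
qed

lemma b_meas_D: assumes i: "i < n" shows "b i \<in> borel_measurable D"
proof -
  have "b i \<in> borel_measurable (restrict_space borel {0..vbar})"
    by (rule borel_measurable_mono_on_fnc[OF b_mono_on[OF i]])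
  then show ?thesis by (subst measurable_cong_sets[OF sets_D refl])
qed

lemma comp_meas: assumes "i < n" "h \<in> borel_measurable D"
  shows "(\<lambda>v. h (v i)) \<in> borel_measurable M"
proof -
  have "(\<lambda>x. x i) \<in> measurable (Pi\<^sub>M {..<n} (\<lambda>_. D)) D"
    by (rule measurable_component_singleton) (use assms in simp)
  from measurable_compose[OF this assms(2)] show ?thesis unfolding profile_measure_def .
qed

lemma wpb_eqf: "(\<lambda>v. wpb M A v i) = (\<lambda>v. b i (v i) * A v i)"
  by (rule ext) (rule wpb_def)

lemma wpb_meas: "i < n \<Longrightarrow> (\<lambda>v. wpb M A v i) \<in> borel_measurable M"
  unfolding wpb_eqf by (rule borel_measurable_times[OF comp_meas[OF _ b_meas_D] A_meas])

lemma space_M_comp: assumes v: "v \<in> space M" and i: "i < n" shows "v i \<in> {0..vbar}"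
proof -
  have "v \<in> (\<Pi>\<^sub>E k\<in>{..<n}. {0..vbar})" using v by (simp only: space_M)
  from PiE_mem[OF this, of i] show ?thesis using i by simp
qed

lemma wpb_nonneg: "v \<in> space M \<Longrightarrow> i < n \<Longrightarrow> 0 \<le> wpb M A v i"
proof -
  assume v: "v \<in> space M" and i: "i < n"
  have "0 \<le> b i (v i)" using space_M_comp[OF v i] b_nonneg[OF i] by simp
  then show ?thesis unfolding wpb_def using A_nonneg[OF v i] by simp
qed

lemma wpb_payment: "payment_rule n M (wpb M A)"
  unfolding payment_rule_def by (simp add: wpb_meas wpb_nonneg)

lemma util_eq: assumes i: "i < n" and t: "t \<in> {0..vbar}" and s: "s \<in> {0..vbar}"
  shows "(\<integral>v. t * A (v(i := s)) i - wpb M A (v(i := s)) i \<partial>M) = (t - b i s) * x i s"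
proof -
  have "(\<integral>v. t * A (v(i := s)) i - wpb M A (v(i := s)) i \<partial>M) = (\<integral>v. (t - b i s) * A (v(i := s)) i \<partial>M)"
    unfolding wpb_upd by (simp add: algebra_simps)
  also have "\<dots> = (t - b i s) * x i s" unfolding interim_alloc_def by simp
  finally show ?thesis .
qed

lemma wpb_implements: "implements n vbar M A (wpb M A)"
  unfolding implements_def
proof (intro conjI allI impI ballI)
  fix i t s assume i: "i < n" and t: "t \<in> {0..vbar}" and s: "s \<in> {0..vbar}"
  have t': "0 \<le> t" "t \<le> vbar" and s': "0 \<le> s" "s \<le> vbar" using t s by auto
  have L: "(t - b i t) * x i t = Zf i t"
    using bx[OF i t'] z_eq[OF i t'] by (simp add: algebra_simps)
  have R: "(t - b i s) * x i s = (t - s) * x i s + Zf i s"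
    using bx[OF i s'] z_eq[OF i s'] by (simp add: algebra_simps)
  have "(t - s) * x i s + Zf i s \<le> Zf i t"
  proof (cases "s \<le> t")
    case True then show ?thesis using Z_diff(1)[OF i s'(1) True t'(2)] by simp
  next
    case False
    then have "Zf i s - Zf i t \<le> (s - t) * x i s" using Z_diff(2)[OF i t'(1) _ s'(2)] by simp
    then show ?thesis by (simp add: algebra_simps)
  qed
  then show "(\<integral>v. t * A (v(i := s)) i - wpb M A (v(i := s)) i \<partial>M)
          \<le> (\<integral>v. t * A (v(i := t)) i - wpb M A (v(i := t)) i \<partial>M)"
    unfolding util_eq[OF i t s] util_eq[OF i t t] L R .
next
  fix i t assume i: "i < n" and t: "t \<in> {0..vbar}"
  have t': "0 \<le> t" "t \<le> vbar" using t by auto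
  have "(\<integral>\<^sup>+ v. ennreal (wpb M A (v(i := t)) i) \<partial>M) = (\<integral>\<^sup>+ v. ennreal (b i t) * ennreal (A (v(i := t)) i) \<partial>M)"
    unfolding wpb_upd
  proof (rule nn_integral_cong)
    fix v assume "v \<in> space M"
    then have "0 \<le> A (v(i := t)) i" using A_nonneg upd_space i t by blast
    then show "ennreal (b i t * A (v(i := t)) i) = ennreal (b i t) * ennreal (A (v(i := t)) i)"
      using b_nonneg[OF i t'] by (simp add: ennreal_mult)
  qed
  also have "\<dots> = ennreal (b i t) * (\<integral>\<^sup>+ v. ennreal (A (v(i := t)) i) \<partial>M)"
    by (rule nn_integral_cmult) (use Aupd_meas[OF i t] in simp)
  also have "(\<integral>\<^sup>+ v. ennreal (A (v(i := t)) i) \<partial>M) = ennreal (x i t)"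
    unfolding interim_alloc_def
    by (rule nn_integral_eq_integral[OF Aupd_int[OF i t]])
       (use i t in \<open>auto intro!: AE_I2 A_nonneg upd_space\<close>)
  also have "ennreal (b i t) * ennreal (x i t) = ennreal (z i t)"
    using bx[OF i t'] b_nonneg[OF i t'] x_nonneg[OF i t] by (metis ennreal_mult)
  finally show "(\<integral>\<^sup>+ v. ennreal (wpb M A (v(i := t)) i) \<partial>M) = ennreal (z i t)" .
qed

lemma D_sets: "S \<subseteq> {0..vbar} \<Longrightarrow> S \<in> sets borel \<Longrightarrow> S \<in> sets D"
  unfolding sets_D by (subst sets_restrict_space_iff) auto

lemma D_single: assumes t: "t \<in> {0..vbar}" shows "emeasure D {t} = 0"
proof -
  have fm: "(\<lambda>x. ennreal (f x)) \<in> borel_measurable (restrict_space lborel {0..vbar})"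
    using f_meas by (auto intro: measurable_restrict_space1)
  have "emeasure D {t} = (\<integral>\<^sup>+ x. ennreal (f x) * indicator {t} x \<partial>restrict_space lborel {0..vbar})"
    unfolding value_dist_def
    by (rule emeasure_density[OF fm]) (use t in \<open>auto simp: sets_restrict_space_iff\<close>)
  also have "\<dots> = (\<integral>\<^sup>+ x. ennreal (f x) * indicator {t} x * indicator {0..vbar} x \<partial>lborel)"
    by (rule nn_integral_restrict_space) simp
  also have "\<dots> = (\<integral>\<^sup>+ (x::real). 0 \<partial>lborel)"
  proof (intro nn_integral_cong_AE)
    show "AE x in lborel. ennreal (f x) * indicator {t} x * indicator {0..vbar} x = 0"
      using AE_lborel_singleton[of t] by eventually_elim simp
  qed
  finally show ?thesis by simp
qed

lemma D_Ico_Icc: assumes t: "0 \<le> t" "t \<le> vbar" shows "emeasure D {0..<t} = emeasure D {0..t}"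
proof -
  have "{0..t} = {0..<t} \<union> {t}" using t by auto
  moreover have "emeasure D {0..<t} + emeasure D {t} = emeasure D ({0..<t} \<union> {t})"
    by (rule plus_emeasure) (use t in \<open>auto intro!: D_sets\<close>)
  ultimately have "emeasure D {0..t} = emeasure D {0..<t} + emeasure D {t}"
    by simp
  then show ?thesis using D_single t by simp
qed

lemma prod_if_one: assumes i: "i < n"
  shows "(\<Prod>k<n. if k = i then (1::ennreal) else m) = m ^ (n - 1)"
proof -
  have "(\<Prod>k<n. if k = i then (1::ennreal) else m) = (\<Prod>k\<in>insert i ({..<n} - {i}). if k = i then 1 else m)"
    using i by (intro prod.cong) auto
  also have "\<dots> = (\<Prod>k\<in>{..<n} - {i}. if k = i then 1 else m)"
    by (subst prod.insert) auto
  also have "\<dots> = (\<Prod>k\<in>{..<n} - {i}. m)" by (rule prod.cong) auto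
  also have "\<dots> = m ^ (n - 1)" using i by simp
  finally show ?thesis .
qed

lemma emeasure_box: assumes i: "i < n" and S: "S \<subseteq> {0..vbar}" "S \<in> sets borel"
  shows "emeasure M (\<Pi>\<^sub>E k\<in>{..<n}. if k = i then {0..vbar} else S) = emeasure D S ^ (n - 1)"
proof -
  interpret D: prob_space D by (rule F_prob)
  interpret PS: product_sigma_finite "\<lambda>_. D" by unfold_locales
  have "emeasure M (\<Pi>\<^sub>E k\<in>{..<n}. if k = i then {0..vbar} else S)
      = (\<Prod>k<n. emeasure D (if k = i then {0..vbar} else S))"
    unfolding profile_measure_def
    by (rule PS.emeasure_PiM) (use S in \<open>auto intro: D_sets\<close>)
  also have "\<dots> = (\<Prod>k<n. if k = i then 1 else emeasure D S)"
    by (rule prod.cong) (auto simp: D.emeasure_space_1[unfolded space_D])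
  finally show ?thesis using prod_if_one[OF i] by simp
qed

lemma box_sets: assumes "S \<subseteq> {0..vbar}" "S \<in> sets borel"
  shows "(\<Pi>\<^sub>E k\<in>{..<n}. if k = i then {0..vbar} else S) \<in> sets M"
  unfolding profile_measure_def
  by (rule sets_PiM_I_finite) (use assms in \<open>auto intro: D_sets simp: sets_D[symmetric]\<close>)

lemma x_formula: assumes i: "i < n" and t: "0 \<le> t" "t \<le> vbar"
  shows "x i t = enn2real (emeasure D {0..<t} ^ (n - 1))"
proof -
  interpret prob_space M by (rule M_prob)
  define E where "E = (\<Pi>\<^sub>E k\<in>{..<n}. if k = i then {0..vbar} else {0..<t})"
  define E' where "E' = (\<Pi>\<^sub>E k\<in>{..<n}. if k = i then {0..vbar} else {0..t})"
  have Es: "E \<in> sets M" "E' \<in> sets M" unfolding E_def E'_def using t by (auto intro!: box_sets)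
  have mE: "measure M E = enn2real (emeasure D {0..<t} ^ (n - 1))"
    unfolding measure_def E_def using t by (subst emeasure_box[OF i]) auto
  have mE': "measure M E' = enn2real (emeasure D {0..<t} ^ (n - 1))"
    unfolding measure_def E'_def using t by (subst emeasure_box[OF i]) (auto simp: D_Ico_Icc)
  have tt: "t \<in> {0..vbar}" using t by auto
  have intE: "integrable M (indicator E :: _ \<Rightarrow> real)"
    by (rule integrable_real_indicator[OF Es(1)]) (simp add: less_top[symmetric])
  have intE': "integrable M (indicator E' :: _ \<Rightarrow> real)"
    by (rule integrable_real_indicator[OF Es(2)]) (simp add: less_top[symmetric])
  have iE: "(\<integral>v. indicator E v \<partial>M) = measure M E"
    using Es(1) by (simp add: sets.Int_space_eq2)
  have iE': "(\<integral>v. indicator E' v \<partial>M) = measure M E'"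
    using Es(2) by (simp add: sets.Int_space_eq2)
  have "(\<integral>v. indicator E v \<partial>M) \<le> x i t"
    unfolding interim_alloc_def
  proof (rule integral_mono[OF intE Aupd_int[OF i tt]])
    fix v assume v: "v \<in> space M"
    have vt: "v(i:=t) \<in> space M" using upd_space[OF v i tt] .
    show "indicator E v \<le> A (v(i := t)) i"
    proof (cases "v \<in> E")
      case True
      obtain w where w: "w < n" "A (v(i:=t)) w = 1" using A_winner[OF vt] by blast
      have "w = i"
      proof (rule ccontr)
        assume wi: "w \<noteq> i"
        have "(v(i:=t)) i \<le> (v(i:=t)) w" using A_max[OF vt w i] .
        moreover have "v w \<in> (if w = i then {0..vbar} else {0..<t})"
          using PiE_mem[OF True[unfolded E_def], of w] w(1) by simp
        then have "v w < t" using wi by simp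
        ultimately show False using wi by simp
      qed
      then show ?thesis using w True by simp
    next
      case False then show ?thesis using A_nonneg[OF vt i] by simp
    qed
  qed
  moreover have "x i t \<le> (\<integral>v. indicator E' v \<partial>M)"
    unfolding interim_alloc_def
  proof (rule integral_mono[OF Aupd_int[OF i tt] intE'])
    fix v assume v: "v \<in> space M"
    have vt: "v(i:=t) \<in> space M" using upd_space[OF v i tt] .
    have vP: "v \<in> (\<Pi>\<^sub>E k\<in>{..<n}. {0..vbar})" using v by (simp only: space_M)
    show "A (v(i := t)) i \<le> indicator E' v"
    proof (cases "A (v(i := t)) i = 1")
      case True
      have "v \<in> E'"
        unfolding E'_def
      proof (rule PiE_I)
        fix k assume k: "k \<in> {..<n}"
        show "v k \<in> (if k = i then {0..vbar} else {0..t})"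
        proof (cases "k = i")
          case True then show ?thesis using space_M_comp[OF v] k by simp
        next
          case False
          have "(v(i:=t)) k \<le> (v(i:=t)) i" using A_max[OF vt i \<open>A (v(i := t)) i = 1\<close>] k by simp
          then show ?thesis using False space_M_comp[OF v, of k] k by simp
        qed
      next
        fix k assume "k \<notin> {..<n}"
        then show "v k = undefined" using vP by (simp add: PiE_def extensional_def)
      qed
      then show ?thesis using True by simp
    next
      case False
      then have "A (v(i := t)) i = 0" using A01[OF vt i] by simp
      then show ?thesis by simp
    qed
  qed
  ultimately show ?thesis using mE mE' iE iE' by simp
qed

lemma x_sym: "i < n \<Longrightarrow> j < n \<Longrightarrow> 0 \<le> t \<Longrightarrow> t \<le> vbar \<Longrightarrow> x i t = x j t"
  using x_formula[of i t] x_formula[of j t] by simp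

lemma z_sym: assumes "i < n" "j < n" "0 \<le> t" "t \<le> vbar" shows "z i t = z j t"
proof -
  have "Zf i t = Zf j t" unfolding Zf_def
  proof (rule integral_cong)
    fix u assume "u \<in> {0..t}"
    then show "x i u = x j u" using assms by (intro x_sym) auto
  qed
  then show ?thesis using z_eq[of i t] z_eq[of j t] x_sym[of i j t] assms by simp
qed

lemma b_sym: assumes "i < n" "j < n" "0 \<le> t" "t \<le> vbar" shows "b i t = b j t"
  unfolding wpb_bid_def using z_sym[OF assms] x_sym[OF assms] by simp

lemma z_le: assumes "i < n" "0 \<le> t" "t \<le> vbar" shows "z i t \<le> vbar"
proof -
  have "z i t \<le> t * x i t" using z_eq[OF assms] Z_bounds[OF assms] by simp
  also have "\<dots> \<le> vbar * 1"
    by (rule mult_mono) (use assms x_le1[of i t] x_nonneg[of i t] in auto)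
  finally show ?thesis by simp
qed

definition RE :: "((nat \<Rightarrow> real) \<Rightarrow> nat \<Rightarrow> real) \<Rightarrow> nat \<Rightarrow> bool" where
  "RE Q i \<longleftrightarrow> (\<lambda>v. Q v i) \<in> borel_measurable M \<and> (\<forall>v\<in>space M. 0 \<le> Q v i) \<and>
     (\<forall>t\<in>{0..vbar}. (\<integral>\<^sup>+v. ennreal (Q (v(i:=t)) i) \<partial>M) = ennreal (z i t))"

lemma weighted_nn:
  assumes Q: "RE Q i" and i: "i < n" and phi: "phi \<in> borel_measurable D" and pos: "\<forall>t\<in>space D. 0 \<le> phi t"
  shows "(\<integral>\<^sup>+ v. ennreal (phi (v i) * Q v i) \<partial>M) = (\<integral>\<^sup>+ t. ennreal (phi t * z i t) \<partial>D)"
proof -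
  have Qm: "(\<lambda>v. Q v i) \<in> borel_measurable M" using Q unfolding RE_def by blast
  have m: "(\<lambda>v. ennreal (phi (v i) * Q v i)) \<in> borel_measurable M"
    by (intro measurable_compose[OF _ measurable_ennreal] borel_measurable_times comp_meas[OF i phi] Qm)
  have "(\<integral>\<^sup>+ v. ennreal (phi (v i) * Q v i) \<partial>M)
      = (\<integral>\<^sup>+ t. (\<integral>\<^sup>+ v. ennreal (phi ((v(i:=t)) i) * Q (v(i:=t)) i) \<partial>M) \<partial>D)"
    by (rule disint[OF i m])
  also have "\<dots> = (\<integral>\<^sup>+ t. ennreal (phi t * z i t) \<partial>D)"
  proof (rule nn_integral_cong)
    fix t assume t: "t \<in> space D"
    have t': "t \<in> {0..vbar}" using t space_D by simp
    have Qm': "(\<lambda>v. ennreal (Q (v(i:=t)) i)) \<in> borel_measurable M"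
      using measurable_compose[OF upd_meas[OF i t'] Qm] by (intro measurable_compose[OF _ measurable_ennreal]) simp
    have "(\<integral>\<^sup>+ v. ennreal (phi ((v(i:=t)) i) * Q (v(i:=t)) i) \<partial>M)
        = (\<integral>\<^sup>+ v. ennreal (phi t) * ennreal (Q (v(i:=t)) i) \<partial>M)"
    proof (rule nn_integral_cong)
      fix v assume v: "v \<in> space M"
      have "0 \<le> Q (v(i:=t)) i" using Q upd_space[OF v i t'] unfolding RE_def by blast
      then show "ennreal (phi ((v(i:=t)) i) * Q (v(i:=t)) i) = ennreal (phi t) * ennreal (Q (v(i:=t)) i)"
        using pos t by (simp add: ennreal_mult)
    qed
    also have "\<dots> = ennreal (phi t) * (\<integral>\<^sup>+ v. ennreal (Q (v(i:=t)) i) \<partial>M)"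
      by (rule nn_integral_cmult[OF Qm'])
    also have "\<dots> = ennreal (phi t) * ennreal (z i t)" using Q t' unfolding RE_def by simp
    also have "\<dots> = ennreal (phi t * z i t)"
      using pos t z_nonneg[OF i] t' by (simp add: ennreal_mult)
    finally show "(\<integral>\<^sup>+ v. ennreal (phi ((v(i:=t)) i) * Q (v(i:=t)) i) \<partial>M) = ennreal (phi t * z i t)" .
  qed
  finally show ?thesis .
qed

lemma weighted_int:
  assumes Q: "RE Q i" and i: "i < n" and phi: "phi \<in> borel_measurable D"
    and pos: "\<forall>t\<in>space D. 0 \<le> phi t" and bnd: "\<forall>t\<in>space D. phi t \<le> K"
  shows "integrable M (\<lambda>v. phi (v i) * Q v i)"
    "(\<integral>v. phi (v i) * Q v i \<partial>M) = enn2real (\<integral>\<^sup>+ t. ennreal (phi t * z i t) \<partial>D)"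
proof -
  interpret D: prob_space D by (rule F_prob)
  have Qm: "(\<lambda>v. Q v i) \<in> borel_measurable M" using Q unfolding RE_def by blast
  have m: "(\<lambda>v. phi (v i) * Q v i) \<in> borel_measurable M"
    by (intro borel_measurable_times comp_meas[OF i phi] Qm)
  have nn: "AE v in M. 0 \<le> phi (v i) * Q v i"
    using Q pos space_M_comp[OF _ i] unfolding RE_def space_D by (auto intro!: AE_I2)
  have "(\<integral>\<^sup>+ t. ennreal (phi t * z i t) \<partial>D) \<le> (\<integral>\<^sup>+ t. ennreal (K * vbar) \<partial>D)"
  proof (rule nn_integral_mono)
    fix t assume t: "t \<in> space D"
    then have t': "0 \<le> t" "t \<le> vbar" using space_D by auto
    have "phi t * z i t \<le> K * vbar"
    proof (rule mult_mono)
      show "0 \<le> K" using pos bnd t by force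
    qed (use pos bnd t z_le[OF i t'] z_nonneg[OF i t'] in auto)
    then show "ennreal (phi t * z i t) \<le> ennreal (K * vbar)" by (rule ennreal_leI)
  qed
  also have "\<dots> < \<infinity>" by (simp add: D.emeasure_space_1)
  finally have fin: "(\<integral>\<^sup>+ v. ennreal (phi (v i) * Q v i) \<partial>M) < \<infinity>"
    using weighted_nn[OF Q i phi pos] by simp
  show "integrable M (\<lambda>v. phi (v i) * Q v i)"
    by (rule integrableI_nonneg[OF m nn fin])
  show "(\<integral>v. phi (v i) * Q v i \<partial>M) = enn2real (\<integral>\<^sup>+ t. ennreal (phi t * z i t) \<partial>D)"
    using integral_eq_nn_integral[OF m nn] weighted_nn[OF Q i phi pos] by simp
qed

lemma signed:
  assumes Q1: "RE Q1 i" and Q2: "RE Q2 i" and i: "i < n" and psi: "psi \<in> borel_measurable D"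
    and bnd: "\<forall>t\<in>space D. \<bar>psi t\<bar> \<le> K"
  shows "integrable M (\<lambda>v. psi (v i) * Q1 v i)" "integrable M (\<lambda>v. psi (v i) * Q2 v i)"
    "(\<integral>v. psi (v i) * Q1 v i \<partial>M) = (\<integral>v. psi (v i) * Q2 v i \<partial>M)"
proof -
  have K: "0 \<le> K" using bnd space_D vbar by force
  define p1 where "p1 t = psi t + K" for t
  define p2 where "p2 (t::real) = K" for t
  have p1m: "p1 \<in> borel_measurable D" unfolding p1_def using psi by simp
  have p2m: "p2 \<in> borel_measurable D" unfolding p2_def by simp
  have p1p: "\<forall>t\<in>space D. 0 \<le> p1 t" "\<forall>t\<in>space D. p1 t \<le> 2 * K"
    using bnd unfolding p1_def by (auto simp: abs_le_iff)
  have p2p: "\<forall>t\<in>space D. 0 \<le> p2 t" "\<forall>t\<in>space D. p2 t \<le> 2 * K"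
    using K unfolding p2_def by auto
  have eq: "psi (v i) * Q v i = p1 (v i) * Q v i - p2 (v i) * Q v i" for Q v
    unfolding p1_def p2_def by (simp add: algebra_simps)
  note a1 = weighted_int[OF Q1 i p1m p1p] and a2 = weighted_int[OF Q1 i p2m p2p]
  note b1 = weighted_int[OF Q2 i p1m p1p] and b2 = weighted_int[OF Q2 i p2m p2p]
  show "integrable M (\<lambda>v. psi (v i) * Q1 v i)" unfolding eq using a1(1) a2(1) by simp
  show "integrable M (\<lambda>v. psi (v i) * Q2 v i)" unfolding eq using b1(1) b2(1) by simp
  show "(\<integral>v. psi (v i) * Q1 v i \<partial>M) = (\<integral>v. psi (v i) * Q2 v i \<partial>M)"
    unfolding eq using a1 a2 b1 b2 by (simp add: Bochner_Integration.integral_diff)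
qed

lemma main_ineq:
  fixes P :: "(nat \<Rightarrow> real) \<Rightarrow> nat \<Rightarrow> real" and g :: "real \<Rightarrow> real"
  assumes n0: "0 < n" and P_rule: "payment_rule n M P"
    and P_RE: "\<forall>i<n. \<forall>t\<in>{0..vbar}. (\<integral>\<^sup>+v. ennreal (P (v(i := t)) i) \<partial>M) = ennreal (z i t)"
    and g: "convex_on UNIV g"
    and gX: "integrable M (\<lambda>v. g (\<Sum>i<n. wpb M A v i))"
    and gY: "integrable M (\<lambda>v. g (\<Sum>i<n. P v i))"
  shows "(\<integral>v. g (\<Sum>i<n. wpb M A v i) \<partial>M) \<le> (\<integral>v. g (\<Sum>i<n. P v i) \<partial>M)"
proof -
  obtain c where cm: "mono c" and sub: "\<And>x y. g x + c x * (y - x) \<le> g y"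
    using convex_subgrad[OF g] by blast
  define W where "W = wpb M A"
  define X where "X v = (\<Sum>i<n. W v i)" for v
  define Y where "Y v = (\<Sum>i<n. P v i)" for v
  define beta where "beta = b 0"
  define psi where "psi t = c (beta t)" for t
  have REP: "RE P i" if "i < n" for i
  proof -
    have "(\<lambda>v. P v i) \<in> borel_measurable M" "\<forall>v\<in>space M. 0 \<le> P v i"
      using P_rule that unfolding payment_rule_def by auto
    then show ?thesis unfolding RE_def using P_RE that by simp
  qed
  have REW: "RE W i" if "i < n" for i
  proof -
    have re: "\<forall>i<n. \<forall>t\<in>{0..vbar}. (\<integral>\<^sup>+ v. ennreal (wpb M A (v(i := t)) i) \<partial>M) = ennreal (z i t)"
      using wpb_implements unfolding implements_def by (rule conjunct2)
    show ?thesis unfolding RE_def W_def using wpb_meas[OF that] wpb_nonneg[OF _ that] re that by simp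
  qed
  have Wb: "W v i = beta (v i) * A v i" if "v \<in> space M" "i < n" for v i
    unfolding W_def wpb_def beta_def using b_sym[OF that(2) n0] space_M_comp[OF that] by simp
  have psim: "psi \<in> borel_measurable D"
    unfolding psi_def beta_def using measurable_compose[OF b_meas_D[OF n0] borel_measurable_mono[OF cm]] by simp
  define K where "K = \<bar>c 0\<bar> + \<bar>c vbar\<bar>"
  have psib: "\<forall>t\<in>space D. \<bar>psi t\<bar> \<le> K"
  proof
    fix t assume "t \<in> space D"
    then have t: "0 \<le> t" "t \<le> vbar" using space_D by auto
    have "0 \<le> beta t" "beta t \<le> vbar" unfolding beta_def using b_nonneg[OF n0 t] b_le[OF n0 t] t by auto
    then have "c 0 \<le> psi t" "psi t \<le> c vbar" unfolding psi_def using cm by (auto intro: monoD)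
    then show "\<bar>psi t\<bar> \<le> K" unfolding K_def by linarith
  qed
  note sP = signed[OF REP REW _ psim psib]
  have pt: "g (X v) + (\<Sum>i<n. psi (v i) * P v i - psi (v i) * W v i) \<le> g (Y v)" if v: "v \<in> space M" for v
  proof -
    obtain w where w: "w < n" "A v w = 1" using A_winner[OF v] by blast
    have Aw: "A v i = (if i = w then 1 else 0)" if "i < n" for i
      using A_other[OF v w(1) w(2) that] w by auto
    have Xw: "X v = beta (v w)"
    proof -
      have "X v = (\<Sum>i<n. if i = w then beta (v w) else 0)"
        unfolding X_def by (rule sum.cong) (auto simp: Wb[OF v] Aw)
      then show ?thesis using w by simp
    qed
    have F3: "psi (v i) * P v i \<le> c (X v) * P v i" if i: "i < n" for i
    proof (rule mult_right_mono)
      have "v i \<le> v w" using A_max[OF v w i] .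
      then have "beta (v i) \<le> beta (v w)" unfolding beta_def
        using b_mono[OF n0] space_M_comp[OF v i] space_M_comp[OF v w(1)] by auto
      then show "psi (v i) \<le> c (X v)" unfolding psi_def Xw using cm by (auto intro: monoD)
      show "0 \<le> P v i" using P_rule v i unfolding payment_rule_def by blast
    qed
    have F4: "psi (v i) * W v i = c (X v) * W v i" if i: "i < n" for i
      using Wb[OF v i] Aw[OF i] Xw unfolding psi_def by auto
    have "(\<Sum>i<n. psi (v i) * P v i - psi (v i) * W v i) \<le> (\<Sum>i<n. c (X v) * P v i - c (X v) * W v i)"
    proof (rule sum_mono)
      fix i assume "i \<in> {..<n}"
      then have i: "i < n" by simp
      show "psi (v i) * P v i - psi (v i) * W v i \<le> c (X v) * P v i - c (X v) * W v i"
        using F3[OF i] F4[OF i] by linarith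
    qed
    also have "\<dots> = c (X v) * (Y v - X v)"
      unfolding X_def Y_def by (simp add: sum_subtractf sum_distrib_left right_diff_distrib)
    finally show ?thesis using sub[of "X v" "Y v"] by linarith
  qed
  have gX': "integrable M (\<lambda>v. g (X v))" using gX unfolding X_def W_def .
  have gY': "integrable M (\<lambda>v. g (Y v))" using gY unfolding Y_def .
  have iS: "integrable M (\<lambda>v. \<Sum>i<n. psi (v i) * P v i - psi (v i) * W v i)"
  proof (rule Bochner_Integration.integrable_sum)
    fix i assume "i \<in> {..<n}"
    then have i: "i < n" by simp
    show "integrable M (\<lambda>v. psi (v i) * P v i - psi (v i) * W v i)"
      by (rule Bochner_Integration.integrable_diff[OF sP(1)[OF i i i] sP(2)[OF i i i]])
  qed
  have intR: "integrable M (\<lambda>v. g (X v) + (\<Sum>i<n. psi (v i) * P v i - psi (v i) * W v i))"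
    using gX' iS by (rule Bochner_Integration.integrable_add)
  have "(\<integral>v. g (X v) + (\<Sum>i<n. psi (v i) * P v i - psi (v i) * W v i) \<partial>M) \<le> (\<integral>v. g (Y v) \<partial>M)"
    by (rule integral_mono[OF intR gY']) (use pt in auto)
  moreover have "(\<integral>v. (\<Sum>i<n. psi (v i) * P v i - psi (v i) * W v i) \<partial>M) = 0"
  proof -
    have "(\<integral>v. (\<Sum>i<n. psi (v i) * P v i - psi (v i) * W v i) \<partial>M)
        = (\<Sum>i<n. (\<integral>v. psi (v i) * P v i - psi (v i) * W v i \<partial>M))"
    proof (rule Bochner_Integration.integral_sum)
      fix i assume "i \<in> {..<n}"
      then have i: "i < n" by simp
      show "integrable M (\<lambda>v. psi (v i) * P v i - psi (v i) * W v i)"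
        by (rule Bochner_Integration.integrable_diff[OF sP(1)[OF i i i] sP(2)[OF i i i]])
    qed
    also have "\<dots> = (\<Sum>i<n. 0)"
    proof (rule sum.cong)
      fix i assume "i \<in> {..<n}"
      then have i: "i < n" by simp
      show "(\<integral>v. psi (v i) * P v i - psi (v i) * W v i \<partial>M) = 0"
        using Bochner_Integration.integral_diff[OF sP(1)[OF i i i] sP(2)[OF i i i]] sP(3)[OF i i i] by simp
    qed simp
    finally show ?thesis by simp
  qed
  moreover have "(\<integral>v. g (X v) + (\<Sum>i<n. psi (v i) * P v i - psi (v i) * W v i) \<partial>M)
      = (\<integral>v. g (X v) \<partial>M) + (\<integral>v. (\<Sum>i<n. psi (v i) * P v i - psi (v i) * W v i) \<partial>M)"
    by (rule Bochner_Integration.integral_add[OF gX' iS])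
  ultimately have "(\<integral>v. g (X v) \<partial>M) \<le> (\<integral>v. g (Y v) \<partial>M)" by linarith
  then show ?thesis unfolding X_def Y_def W_def .
qed

end

theorem mainTheorem7:
  fixes n :: nat and vbar :: real and f :: "real \<Rightarrow> real"
    and A P :: "(nat \<Rightarrow> real) \<Rightarrow> nat \<Rightarrow> real"
  assumes n: "2 \<le> n"
    and vbar: "0 < vbar"
    and f_meas: "f \<in> borel_measurable borel"
    and f_pos: "\<forall>x\<in>{0..vbar}. 0 < f x"
    and F_prob: "prob_space (value_dist vbar f)"
    and A_eff: "efficient_single n (profile_measure n (value_dist vbar f)) A"
    and P_rule: "payment_rule n (profile_measure n (value_dist vbar f)) P"
    and P_impl: "implements n vbar (profile_measure n (value_dist vbar f)) A P"
  shows "payment_rule n (profile_measure n (value_dist vbar f))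
           (wpb (profile_measure n (value_dist vbar f)) A)
       \<and> implements n vbar (profile_measure n (value_dist vbar f)) A
           (wpb (profile_measure n (value_dist vbar f)) A)
       \<and> (\<forall>g :: real \<Rightarrow> real. convex_on UNIV g \<longrightarrow>
           integrable (profile_measure n (value_dist vbar f))
             (\<lambda>v. g (\<Sum>i<n. wpb (profile_measure n (value_dist vbar f)) A v i)) \<longrightarrow>
           integrable (profile_measure n (value_dist vbar f)) (\<lambda>v. g (\<Sum>i<n. P v i)) \<longrightarrow>
           (\<integral>v. g (\<Sum>i<n. wpb (profile_measure n (value_dist vbar f)) A v i)
              \<partial>profile_measure n (value_dist vbar f))
           \<le> (\<integral>v. g (\<Sum>i<n. P v i) \<partial>profile_measure n (value_dist vbar f)))"
  proof -
  interpret auct n vbar f A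
    using vbar f_meas F_prob A_eff by (rule auct.intro)
  have n0: "0 < n" using n by simp
  have P_RE: "\<forall>i<n. \<forall>t\<in>{0..vbar}. (\<integral>\<^sup>+v. ennreal (P (v(i := t)) i) \<partial>profile_measure n (value_dist vbar f)) = ennreal (interim_pay (profile_measure n (value_dist vbar f)) A i t)"
    using P_impl unfolding implements_def by (rule conjunct2)
  show ?thesis
  proof (intro conjI allI impI)
    show "payment_rule n (profile_measure n (value_dist vbar f)) (wpb (profile_measure n (value_dist vbar f)) A)"
      by (rule wpb_payment)
    show "implements n vbar (profile_measure n (value_dist vbar f)) A (wpb (profile_measure n (value_dist vbar f)) A)"
      by (rule wpb_implements)
    fix g :: "real \<Rightarrow> real"
    assume "convex_on UNIV g"
      and "integrable (profile_measure n (value_dist vbar f)) (\<lambda>v. g (\<Sum>i<n. wpb (profile_measure n (value_dist vbar f)) A v i))"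
      and "integrable (profile_measure n (value_dist vbar f)) (\<lambda>v. g (\<Sum>i<n. P v i))"
    then show "(\<integral>v. g (\<Sum>i<n. wpb (profile_measure n (value_dist vbar f)) A v i) \<partial>profile_measure n (value_dist vbar f))
           \<le> (\<integral>v. g (\<Sum>i<n. P v i) \<partial>profile_measure n (value_dist vbar f))"
      by (rule main_ineq[OF n0 P_rule P_RE])
  qed
qed

end
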